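(* Let $G_1,G_2,H_1,H_2\in SL^+_{sym}(2)$, let $g_i,h_i$ be the largest eigenvalues of $G_i,H_i$, and assume $K^{min}=\sqrt{g_1h_1g_2h_2}$. Then there exist $A,B\in O(2)$ such that $$A^TG_1A=\begin{pmatrix}g_1&0\\0&\frac1{g_1}\end{pmatrix},\quad A^TG_2A=\begin{pmatrix}\frac1{g_2}&0\\0&g_2\end{pmatrix},\quad B^TH_1B=\begin{pmatrix}h_1&0\\0&\frac1{h_1}\end{pmatrix},\quad B^TH_2B=\begin{pmatrix}\frac1{h_2}&0\\0&h_2\end{pmatrix}.$$
   Context: $SL^+_{sym}(2)$: real symmetric positive definite $2\times2$ matrices with determinant $1$; $SL(2)$: real $2\times2$ matrices of determinant $1$; $O(2)$: orthogonal $2\times 2$ matrices; $\lambda_{\max}$: largest eigenvalue. $K^{min}:=\min_{A,B\in SL(2)}\max_{i=1,2}\lambda_{\max}(B^TG_iB)\,\lambda_{\max}(A^TH_iA)$. *)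

theory Defs
  imports "HOL-Analysis.Analysis"
begin

type_synonym mat2 = "real^2^2"

definition SLsym_pos :: "mat2 set" where
  "SLsym_pos = {G. transpose G = G \<and> (\<forall>x::real^2. x \<noteq> 0 \<longrightarrow> x \<bullet> (G *v x) > 0) \<and> det G = 1}"

definition SL2 :: "mat2 set" where
  "SL2 = {A. det A = 1}"

definition lambda_max :: "mat2 \<Rightarrow> real" where
  "lambda_max M = Max {c. \<exists>v::real^2. v \<noteq> 0 \<and> M *v v = c *\<^sub>R v}"

text \<open>K^min, the minimum (taken as infimum) over A, B in SL(2).\<close>
definition Kmin :: "mat2 \<Rightarrow> mat2 \<Rightarrow> mat2 \<Rightarrow> mat2 \<Rightarrow> real" where
  "Kmin G1 G2 H1 H2 = Inf {max (lambda_max (transpose B ** G1 ** B) * lambda_max (transpose A ** H1 ** A))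
                               (lambda_max (transpose B ** G2 ** B) * lambda_max (transpose A ** H2 ** A))
                           | A B. A \<in> SL2 \<and> B \<in> SL2}"

definition diag2 :: "real \<Rightarrow> real \<Rightarrow> mat2" where
  "diag2 a b = (\<chi> i j. if i = j then (if i = 1 then a else b) else 0)"

end

theory Submission
  imports Defs
begin

lemma mat2_eq: "(M::real^2^2) = N \<longleftrightarrow> M$1$1 = N$1$1 \<and> M$1$2 = N$1$2 \<and> M$2$1 = N$2$1 \<and> M$2$2 = N$2$2"
  by (auto simp: vec_eq_iff forall_2)

lemma mm2: "((A::real^2^2) ** B)$i$j = A$i$1*B$1$j + A$i$2*B$2$j"
  by (simp add: matrix_matrix_mult_def sum_2)

lemma tr2: "(transpose (A::real^2^2))$i$j = A$j$i" by (simp add: transpose_def)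

lemma mv2: "((A::real^2^2) *v x)$i = A$i$1*x$1 + A$i$2*x$2"
  by (simp add: matrix_vector_mult_def sum_2)

lemma in2: "(x::real^2) \<bullet> y = x$1*y$1 + x$2*y$2"
  by (simp add: inner_vec_def sum_2)

lemma vec2_eq: "(x::real^2) = y \<longleftrightarrow> x$1 = y$1 \<and> x$2 = y$2"
  by (auto simp: vec_eq_iff forall_2)

lemma mat1_2: "(mat 1 :: real^2^2)$1$1 = 1" "(mat 1 :: real^2^2)$2$2 = 1" "(mat 1 :: real^2^2)$1$2 = 0" "(mat 1 :: real^2^2)$2$1 = 0"
  by (auto simp: mat_def)

lemma diag2_c: "diag2 a b $1$1 = a" "diag2 a b $2$2 = b" "diag2 a b $1$2 = 0" "diag2 a b $2$1 = 0"
  by (auto simp: diag2_def)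

definition mk2 :: "real \<Rightarrow> real \<Rightarrow> real \<Rightarrow> real \<Rightarrow> real^2^2" where
  "mk2 a b c d = (\<chi> i j. if i = 1 then (if j = 1 then a else b) else (if j = 1 then c else d))"

lemma mk2_c[simp]: "mk2 a b c d $1$1 = a" "mk2 a b c d $1$2 = b" "mk2 a b c d $2$1 = c" "mk2 a b c d $2$2 = d"
  by (auto simp: mk2_def)

lemma test: "det (mk2 a b c d) = a*d - b*c" by (simp add: det_2)

definition mkv :: "real \<Rightarrow> real \<Rightarrow> real^2" where
  "mkv a b = (\<chi> i. if i = 1 then a else b)"
lemma mkv_c[simp]: "mkv a b $1 = a" "mkv a b $2 = b" by (auto simp: mkv_def)

lemma SLsym_sym: "S \<in> SLsym_pos \<Longrightarrow> S$2$1 = S$1$2"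
  unfolding SLsym_pos_def by (metis (mono_tags, lifting) mem_Collect_eq tr2)

lemma SLsym_det: "S \<in> SLsym_pos \<Longrightarrow> S$1$1 * S$2$2 - S$1$2 * S$1$2 = 1"
  using SLsym_sym[of S] unfolding SLsym_pos_def by (simp add: det_2)

lemma SLsym_pos_entries: "S \<in> SLsym_pos \<Longrightarrow> S$1$1 > 0 \<and> S$2$2 > 0"
proof -
  assume S: "S \<in> SLsym_pos"
  hence pd: "\<And>x. x \<noteq> 0 \<Longrightarrow> x \<bullet> (S *v x) > 0" unfolding SLsym_pos_def by auto
  have "mkv 1 0 \<noteq> 0" "mkv 0 1 \<noteq> 0" by (auto simp: vec2_eq)
  from pd[OF this(1)] pd[OF this(2)] show ?thesis by (simp add: in2 mv2)
qed

lemma eig_root: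
  fixes S :: "real^2^2"
  assumes "S$2$1 = S$1$2" "S$1$1 * S$2$2 - S$1$2 * S$1$2 = 1"
    and "v \<noteq> 0" "S *v v = c *\<^sub>R v"
  shows "c^2 - (S$1$1 + S$2$2) * c + 1 = 0"
proof -
  define p q r where "p = S$1$1" "q = S$1$2" "r = S$2$2"
  have e1: "p * v$1 + q * v$2 = c * v$1" and e2: "q * v$1 + r * v$2 = c * v$2"
    using assms(4) assms(1) unfolding vec2_eq p_q_r_def by (auto simp: mv2)
  have "((p-c)*(r-c) - q*q) * v$1 = 0" using e1 e2 by algebra
  moreover have "((p-c)*(r-c) - q*q) * v$2 = 0" using e1 e2 by algebra
  moreover have "v$1 \<noteq> 0 \<or> v$2 \<noteq> 0" using assms(3) by (auto simp: vec2_eq)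
  ultimately have "(p-c)*(r-c) - q*q = 0" by auto
  thus ?thesis using assms(2) unfolding p_q_r_def by (simp add: power2_eq_square algebra_simps)
qed

lemma lmax_char:
  assumes S: "S \<in> SLsym_pos"
  shows "lambda_max S \<ge> 1 \<and> S$1$1 + S$2$2 = lambda_max S + 1 / lambda_max S"
proof -
  define p q r where "p = S$1$1" "q = S$1$2" "r = S$2$2"
  have sym: "S$2$1 = q" using SLsym_sym[OF S] p_q_r_def by simp
  have dt: "p*r - q*q = 1" using SLsym_det[OF S] p_q_r_def by simp
  have pos: "p > 0" "r > 0" using SLsym_pos_entries[OF S] p_q_r_def by auto
  define T where "T = p + r"
  define D where "D = (p-r)^2 + 4*q^2"
  have D0: "D \<ge> 0" unfolding D_def by simp
  have DT: "D = T^2 - 4" unfolding D_def T_def using dt by algebra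
  have T2: "T \<ge> 2"
  proof -
    have "T^2 \<ge> 2^2" using DT D0 by simp
    moreover have "T > 0" using pos T_def by simp
    ultimately show ?thesis by (meson less_imp_le power2_le_imp_le)
  qed
  define l0 where "l0 = (T + sqrt D)/2"
  have sq: "sqrt D ^2 = D" using D0 by simp
  have l0s: "2*l0 - T = sqrt D" unfolding l0_def by (simp add: field_simps)
  have h: "(2*l0 - T)^2 = T^2 - 4" using l0s sq DT by simp
  hence l0r: "l0^2 - T*l0 + 1 = 0" unfolding power2_eq_square by (simp add: algebra_simps)
  have "T + sqrt D \<ge> 2" using T2 real_sqrt_ge_zero[OF D0] by linarith
  hence l01: "l0 \<ge> 1" unfolding l0_def by simp
  define E where "E = {c. \<exists>v::real^2. v \<noteq> 0 \<and> S *v v = c *\<^sub>R v}"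
  have Eroot: "c^2 - T*c + 1 = 0" if "c \<in> E" for c
    using that eig_root[of S] SLsym_sym[OF S] SLsym_det[OF S] unfolding E_def T_def p_q_r_def by blast
  have Esub: "E \<subseteq> {l0, T - l0}"
  proof
    fix c assume "c \<in> E"
    hence "c^2 - T*c + 1 = 0" by (rule Eroot)
    hence "(c - l0) * (c - (T - l0)) = 0" using l0r by algebra
    thus "c \<in> {l0, T - l0}" by auto
  qed
  have l0E: "l0 \<in> E"
  proof (cases "q = 0 \<and> l0 = p")
    case True
    have "S *v mkv 1 0 = l0 *\<^sub>R mkv 1 0" using True sym p_q_r_def by (simp add: vec2_eq mv2)
    moreover have "mkv 1 0 \<noteq> 0" by (simp add: vec2_eq)
    ultimately show ?thesis unfolding E_def by blast
  next
    case False
    have qq: "q*q = (l0 - p)*(l0 - r)" using l0r dt unfolding T_def by algebra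
    have "S *v mkv q (l0 - p) = l0 *\<^sub>R mkv q (l0 - p)" using sym p_q_r_def qq
      by (simp add: vec2_eq mv2 algebra_simps)
    moreover have "mkv q (l0 - p) \<noteq> 0" using False by (simp add: vec2_eq)
    ultimately show ?thesis unfolding E_def by blast
  qed
  have le: "c \<le> l0" if "c \<in> E" for c
  proof -
    have "(2*c - T)^2 = D" using Eroot[OF that] DT by algebra
    hence "\<bar>2*c - T\<bar> = sqrt D" by (metis real_sqrt_abs)
    thus ?thesis using l0s abs_ge_self[of "2*c-T"] by linarith
  qed
  have fin: "finite E" using Esub finite_subset by blast
  have "lambda_max S = l0" unfolding lambda_max_def E_def[symmetric]
    using fin l0E le by (intro Max_eqI) auto
  moreover have "T = l0 + 1/l0" using l0r l01 by (simp add: field_simps power2_eq_square)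
  ultimately show ?thesis using l01 T_def p_q_r_def by simp
qed

lemma cong_SL:
  assumes G: "G \<in> SLsym_pos" and B: "B \<in> SL2"
  shows "transpose B ** G ** B \<in> SLsym_pos"
proof -
  have sym: "transpose G = G" and pd: "\<And>x. x \<noteq> 0 \<Longrightarrow> x \<bullet> (G *v x) > 0" and dG: "det G = 1"
    using G unfolding SLsym_pos_def by auto
  have dB: "det B = 1" using B unfolding SL2_def by auto
  have "transpose (transpose B ** G ** B) = transpose B ** G ** B"
    by (simp add: matrix_transpose_mul sym matrix_mul_assoc)
  moreover have "det (transpose B ** G ** B) = 1" by (simp add: det_mul det_transpose dB dG)
  moreover have "x \<bullet> ((transpose B ** G ** B) *v x) > 0" if "x \<noteq> 0" for x
  proof -
    have "B *v x \<noteq> 0"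
    proof
      assume h: "B *v x = 0"
      have e1: "B$1$1*x$1 + B$1$2*x$2 = 0" and e2: "B$2$1*x$1 + B$2$2*x$2 = 0"
        using h by (auto simp: vec2_eq mv2)
      have d: "B$1$1 * B$2$2 - B$1$2 * B$2$1 = 1" using dB by (simp add: det_2)
      have "x$1 = (B$1$1 * B$2$2 - B$1$2 * B$2$1) * x$1" using d by simp
      also have "\<dots> = 0" using e1 e2 by algebra
      finally have "x$1 = 0" .
      moreover have "x$2 = (B$1$1 * B$2$2 - B$1$2 * B$2$1) * x$2" using d by simp
      moreover have "(B$1$1 * B$2$2 - B$1$2 * B$2$1) * x$2 = 0" using e1 e2 by algebra
      ultimately show False using that by (simp add: vec2_eq)
    qed
    hence "(B *v x) \<bullet> (G *v (B *v x)) > 0" by (rule pd)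
    moreover have "(B *v x) \<bullet> (G *v (B *v x)) = x \<bullet> ((transpose B ** G ** B) *v x)"
      by (simp add: in2 mv2 mm2 tr2 algebra_simps)
    ultimately show ?thesis by simp
  qed
  ultimately show ?thesis unfolding SLsym_pos_def by auto
qed

lemma trace_cong:
  fixes G :: "real^2^2"
  assumes "G$2$1 = G$1$2"
  shows "(transpose (mk2 a 0 c d) ** G ** mk2 a 0 c d)$1$1 + (transpose (mk2 a 0 c d) ** G ** mk2 a 0 c d)$2$2
     = G$1$1 * a^2 + 2 * G$1$2 * a * c + G$2$2 * (c^2 + d^2)"
  using assms by (simp add: mm2 tr2 power2_eq_square algebra_simps)

lemma orth2: "orthogonal_matrix (U::real^2^2) \<longleftrightarrow>
  (U$1$1*U$1$1 + U$2$1*U$2$1 = 1 \<and> U$1$2*U$1$2 + U$2$2*U$2$2 = 1 \<and> U$1$1*U$1$2 + U$2$1*U$2$2 = 0 \<and>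
   U$1$1*U$1$1 + U$1$2*U$1$2 = 1 \<and> U$2$1*U$2$1 + U$2$2*U$2$2 = 1 \<and> U$1$1*U$2$1 + U$1$2*U$2$2 = 0)"
  unfolding orthogonal_matrix_def mat2_eq by (auto simp: mm2 tr2 mat1_2 algebra_simps)

lemma diagonalize:
  assumes S: "S \<in> SLsym_pos"
  shows "\<exists>U. orthogonal_matrix U \<and> transpose U ** S ** U = diag2 (lambda_max S) (1 / lambda_max S)"
proof -
  define g where "g = lambda_max S"
  define p q r where "p = S$1$1" "q = S$1$2" "r = S$2$2"
  have sym: "S$2$1 = q" using SLsym_sym[OF S] p_q_r_def by simp
  have dt: "p*r - q*q = 1" using SLsym_det[OF S] p_q_r_def by simp
  have g1: "g \<ge> 1" and tr: "p + r = g + 1/g" using lmax_char[OF S] unfolding g_def p_q_r_def by auto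
  have gr: "g*g - (p+r)*g + 1 = 0" using tr g1 by (simp add: field_simps)
  have qq: "q*q = (g-p)*(g-r)" using gr dt by algebra
  have ig: "1/g = p + r - g" using tr by simp
  show ?thesis
  proof (cases "q = 0 \<and> g = p")
    case True
    have "r = 1/g" using ig True by simp
    hence "transpose (mat 1) ** S ** mat 1 = diag2 g (1/g)"
      using True sym p_q_r_def by (simp add: mat2_eq diag2_c)
    moreover have "orthogonal_matrix (mat 1 :: real^2^2)" by (simp add: orthogonal_matrix_def)
    ultimately show ?thesis unfolding g_def by blast
  next
    case False
    define w where "w = g - p"
    define n where "n = sqrt (q*q + w*w)"
    have pos: "q*q + w*w > 0" using False unfolding w_def
      by (metis add.commute add_0 diff_add_cancel mult_eq_0_iff not_real_square_gt_zero add_pos_nonneg zero_le_square add_nonneg_pos)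
    have n0: "n > 0" unfolding n_def using pos by simp
    have nn: "n*n = q*q + w*w" unfolding n_def using pos by simp
    define ua va where "ua = q/n" "va = w/n"
    have uq: "ua * n = q" and vw: "va * n = w" unfolding ua_va_def using n0 by auto
    have gw: "g = w + p" unfolding w_def by simp
    have qq': "q * q = w * (w + p - r)" using qq unfolding w_def by simp
    have qqw: "q * q * w = w * (w * (w + p - r))" by (simp add: qq' mult_ac)
    have uv: "ua * ua + va * va = 1"
    proof -
      have "(ua * ua + va * va) * (n*n) = (ua * n) * (ua * n) + (va * n) * (va * n)" by (simp add: algebra_simps)
      also have "\<dots> = n*n" using uq vw nn by simp
      finally show ?thesis using n0 by simp
    qed
    define U where "U = mk2 ua (-va) va ua"
    have orth: "orthogonal_matrix U" unfolding U_def orth2 using uv by (simp add: algebra_simps)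
    have c11: "p * ua * ua + 2 * q * ua * va + r * va * va = g"
    proof -
      have "(p * ua * ua + 2 * q * ua * va + r * va * va) * (n*n) = p * (ua * n) * (ua * n) + 2 * q * (ua * n) * (va * n) + r * (va * n) * (va * n)" by (simp add: algebra_simps)
      also have "\<dots> = p * q * q + 2 * q * q * w + r * w * w" using uq vw by simp
      also have "\<dots> = g * (q * q + w * w)" using gw qqw by (simp add: algebra_simps)
      also have "\<dots> = g * (n*n)" using nn by simp
      finally show ?thesis using n0 by simp
    qed
    have c22: "p * va * va - 2 * q * ua * va + r * ua * ua = p + r - g"
    proof -
      have "(p * va * va - 2 * q * ua * va + r * ua * ua) * (n*n) = p * (va * n) * (va * n) - 2 * q * (ua * n) * (va * n) + r * (ua * n) * (ua * n)" by (simp add: algebra_simps)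
      also have "\<dots> = p * w * w - 2 * q * q * w + r * q * q" using uq vw by simp
      also have "\<dots> = (p + r - g) * (q * q + w * w)" using gw qqw by (simp add: algebra_simps)
      also have "\<dots> = (p + r - g) * (n*n)" using nn by simp
      finally show ?thesis using n0 by simp
    qed
    have c12: "(r - p) * ua * va + q * (ua * ua - va * va) = 0"
    proof -
      have "((r - p) * ua * va + q * (ua * ua - va * va)) * (n*n) = (r - p) * (ua * n) * (va * n) + q * ((ua * n) * (ua * n) - (va * n) * (va * n))" by (simp add: algebra_simps)
      also have "\<dots> = (r - p) * q * w + q * (q * q - w * w)" using uq vw by simp
      also have "\<dots> = 0"
      proof -
        have "q * (q * q) = q * (w * (w + p - r))" using qq' by simp
        thus ?thesis by (simp add: algebra_simps)
      qed
      finally show ?thesis using n0 by simp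
    qed
    have "transpose U ** S ** U = diag2 g (1/g)"
      unfolding mat2_eq U_def ig using sym c11 c22 c12 p_q_r_def
      by (simp add: mm2 tr2 diag2_c algebra_simps)
    thus ?thesis using orth unfolding g_def by blast
  qed
qed

lemma diag_swap:
  assumes "orthogonal_matrix U" "transpose U ** S ** U = diag2 a b"
  shows "orthogonal_matrix (U ** mk2 0 1 1 0) \<and> transpose (U ** mk2 0 1 1 0) ** S ** (U ** mk2 0 1 1 0) = diag2 b a"
proof
  have "orthogonal_matrix (mk2 0 1 1 0)" unfolding orth2 by simp
  thus "orthogonal_matrix (U ** mk2 0 1 1 0)" using assms(1) by (simp add: orthogonal_matrix_mul)
  have "transpose (U ** mk2 0 1 1 0) ** S ** (U ** mk2 0 1 1 0) = transpose (mk2 0 1 1 0) ** (transpose U ** S ** U) ** mk2 0 1 1 0"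
    by (simp add: matrix_transpose_mul matrix_mul_assoc)
  thus "transpose (U ** mk2 0 1 1 0) ** S ** (U ** mk2 0 1 1 0) = diag2 b a"
    using assms(2) by (simp add: mat2_eq mm2 tr2 diag2_c)
qed

lemma lin_cong:
  fixes U G :: "real^2^2"
  shows "transpose U ** (c *\<^sub>R mat 1 - k *\<^sub>R G) ** U = c *\<^sub>R (transpose U ** U) - k *\<^sub>R (transpose U ** G ** U)"
  by (simp add: mat2_eq mm2 tr2 mat1_2 algebra_simps)

lemma hinj: "(x::real) \<ge> 1 \<Longrightarrow> y \<ge> 1 \<Longrightarrow> x + 1/x \<le> y + 1/y \<Longrightarrow> x \<le> y"
proof (rule ccontr)
  assume a: "x \<ge> 1" "y \<ge> 1" "x + 1/x \<le> y + 1/y" "\<not> x \<le> y"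
  have "x * y \<ge> x * 1" using a by (intro mult_left_mono) auto
  hence xy: "x * y > 1" using a by linarith
  have "x + 1/x - (y + 1/y) = (x - y) * (1 - 1/(x*y))" using a by (simp add: field_simps)
  moreover have "(x - y) * (1 - 1/(x*y)) > 0"
  proof (rule mult_pos_pos)
    show "x - y > 0" using a by simp
    show "1 - 1/(x*y) > 0" using xy by (simp add: field_simps)
  qed
  ultimately show False using a by linarith
qed

lemma side:
  assumes G1: "G1 \<in> SLsym_pos" and G2: "G2 \<in> SLsym_pos"
  shows "\<exists>B\<in>SL2. \<exists>L. L \<ge> 1 \<and> lambda_max (transpose B ** G1 ** B) = L \<and> lambda_max (transpose B ** G2 ** B) = L
     \<and> L^2 \<le> lambda_max G1 * lambda_max G2
     \<and> (L^2 = lambda_max G1 * lambda_max G2 \<longrightarrow> (\<exists>A. orthogonal_matrix A \<and>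
          transpose A ** G1 ** A = diag2 (lambda_max G1) (1 / lambda_max G1) \<and>
          transpose A ** G2 ** A = diag2 (1 / lambda_max G2) (lambda_max G2)))"
proof -
  define g1 g2 where "g1 = lambda_max G1" "g2 = lambda_max G2"
  define p1 q1 r1 where "p1 = G1$1$1" "q1 = G1$1$2" "r1 = G1$2$2"
  define p2 q2 r2 where "p2 = G2$1$1" "q2 = G2$1$2" "r2 = G2$2$2"
  have sym1: "G1$2$1 = q1" using SLsym_sym[OF G1] p1_q1_r1_def by simp
  have dt1: "p1 * r1 - q1 * q1 = 1" using SLsym_det[OF G1] p1_q1_r1_def by simp
  have pos1: "p1 > 0" "r1 > 0" using SLsym_pos_entries[OF G1] p1_q1_r1_def by auto
  have g11: "g1 \<ge> 1" and tr1: "p1 + r1 = g1 + 1/g1" using lmax_char[OF G1] unfolding g1_g2_def p1_q1_r1_def by auto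
  have sym2: "G2$2$1 = q2" using SLsym_sym[OF G2] p2_q2_r2_def by simp
  have dt2: "p2 * r2 - q2 * q2 = 1" using SLsym_det[OF G2] p2_q2_r2_def by simp
  have pos2: "p2 > 0" "r2 > 0" using SLsym_pos_entries[OF G2] p2_q2_r2_def by auto
  have g21: "g2 \<ge> 1" and tr2: "p2 + r2 = g2 + 1/g2" using lmax_char[OF G2] unfolding g1_g2_def p2_q2_r2_def by auto
  define S1 R1 A1 where "S1 = g1 + 1/g1" "R1 = g1 - 1/g1" "A1 = p1 - r1"
  define S2 R2 A2 where "S2 = g2 + 1/g2" "R2 = g2 - 1/g2" "A2 = p2 - r2"
  have ig1: "1/g1 \<le> 1" "1/g1 > 0" using g11 by auto
  have R1p: "R1 \<ge> 0" using g11 ig1 unfolding S1_R1_A1_def by linarith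
  have ig2: "1/g2 \<le> 1" "1/g2 > 0" using g21 by auto
  have R2p: "R2 \<ge> 0" using g21 ig2 unfolding S2_R2_A2_def by linarith
  have SR1: "S1 * S1 - R1 * R1 = 4" using g11 unfolding S1_R1_A1_def by (simp add: field_simps)
  have SR2: "S2 * S2 - R2 * R2 = 4" using g21 unfolding S2_R2_A2_def by (simp add: field_simps)
  have AR1: "A1 * A1 + 4 * (q1 * q1) = R1 * R1"
  proof -
    have "A1 * A1 + 4 * (q1 * q1) = (p1 + r1) * (p1 + r1) - 4 * (p1 * r1 - q1 * q1)" unfolding S1_R1_A1_def by (simp add: algebra_simps)
    also have "\<dots> = S1 * S1 - 4" using tr1 dt1 unfolding S1_R1_A1_def by simp
    finally show ?thesis using SR1 by simp
  qed
  have AR2: "A2 * A2 + 4 * (q2 * q2) = R2 * R2"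
  proof -
    have "A2 * A2 + 4 * (q2 * q2) = (p2 + r2) * (p2 + r2) - 4 * (p2 * r2 - q2 * q2)" unfolding S2_R2_A2_def by (simp add: algebra_simps)
    also have "\<dots> = S2 * S2 - 4" using tr2 dt2 unfolding S2_R2_A2_def by simp
    finally show ?thesis using SR2 by simp
  qed
  define C where "C = A1 * A2 + 4 * (q1 * q2)"
  have CS: "C * C \<le> (R1 * R2) * (R1 * R2)"
  proof -
    have "(R1 * R2) * (R1 * R2) - C * C = (A1 * A1 + 4 * (q1 * q1)) * (A2 * A2 + 4 * (q2 * q2)) - C * C"
      using AR1 AR2 by simp
    also have "\<dots> = 4 * (A1 * q2 - A2 * q1)^2" unfolding C_def by (simp add: power2_eq_square algebra_simps)
    finally show ?thesis by (smt (verit) zero_le_power2)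
  qed
  have Cb: "\<bar>C\<bar> \<le> R1 * R2"
  proof -
    have "\<bar>C\<bar> * \<bar>C\<bar> \<le> (R1 * R2) * (R1 * R2)" using CS by (simp add: abs_mult_self_eq)
    moreover have "R1 * R2 \<ge> 0" using R1p R2p by simp
    ultimately show ?thesis by (meson abs_ge_zero mult_mono not_le order_le_less_trans mult_strict_mono')
  qed
  define tau where "tau = p1 * r2 + r1 * p2 - 2 * (q1 * q2)"
  have tauC: "2 * tau = S1 * S2 - C"
  proof -
    have "2 * tau = (p1 + r1) * (p2 + r2) - A1 * A2 - 4 * (q1 * q2)" unfolding tau_def S1_R1_A1_def S2_R2_A2_def
      by (simp add: algebra_simps)
    thus ?thesis using tr1 tr2 unfolding C_def S1_R1_A1_def S2_R2_A2_def by simp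
  qed
  define X where "X = g1 * g2"
  have X1: "X \<ge> 1" unfolding X_def using g11 g21 by (metis mult_mono' mult_1_left zero_le_one order_trans)
  have XS: "2 * (X + 1/X) = S1 * S2 + R1 * R2" unfolding X_def S1_R1_A1_def S2_R2_A2_def using g11 g21
    by (simp add: field_simps)
  have tauX: "tau \<le> X + 1/X" using tauC XS Cb abs_ge_minus_self[of C] by (smt (verit))
  have SRgt: "S1 * S2 > R1 * R2"
  proof -
    have "S1 > R1" "S2 > R2" using g11 g21 unfolding S1_R1_A1_def S2_R2_A2_def by auto
    thus ?thesis using R1p R2p by (simp add: mult_strict_mono')
  qed
  have tau0: "tau > 0" using tauC Cb SRgt abs_ge_self[of C] by linarith
  define s where "s = sqrt (2 + tau)"
  have s0: "s > 0" unfolding s_def using tau0 by simp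
  have ss: "s * s = 2 + tau" unfolding s_def using tau0 by simp
  define x y z where "x = (r1 + r2)/s" "y = -(q1+q2)/s" "z = (p1+p2)/s"
  have x0: "x > 0" unfolding x_y_z_def using pos1 pos2 s0 by simp
  have xz: "x * z - y * y = 1"
  proof -
    have "x * z - y * y = ((r1 + r2) * (p1 + p2) - (q1 + q2) * (q1 + q2)) / (s * s)" unfolding x_y_z_def using s0
      by (simp add: field_simps)
    also have "(r1+r2)*(p1+p2) - (q1+q2)*(q1+q2) = (p1 * r1 - q1 * q1) + (p2 * r2 - q2 * q2) + tau"
      unfolding tau_def by (simp add: algebra_simps)
    also have "\<dots> = s * s" using dt1 dt2 ss by simp
    finally show ?thesis using s0 by simp
  qed
  define a where "a = sqrt x"
  have a0: "a > 0" unfolding a_def using x0 by simp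
  have aa: "a * a = x" unfolding a_def using x0 by simp
  define B where "B = mk2 a 0 (y/a) (1/a)"
  have BSL: "B \<in> SL2" unfolding SL2_def B_def using a0 by (simp add: det_2)
  have cd: "(y/a)^2 + (1/a)^2 = z"
  proof -
    have "(y/a)^2 + (1/a)^2 = (y*y + 1)/(a*a)" using a0 by (simp add: field_simps power2_eq_square)
    also have "\<dots> = z" using aa xz x0 by (simp add: field_simps)
    finally show ?thesis .
  qed
  have trB1: "(transpose B ** G1 ** B)$1$1 + (transpose B ** G1 ** B)$2$2 = s"
  proof -
    have "(transpose B ** G1 ** B)$1$1 + (transpose B ** G1 ** B)$2$2 = p1 * a^2 + 2 * q1 * a * (y/a) + r1 * ((y/a)^2 + (1/a)^2)"
      unfolding B_def using trace_cong[of G1 a "y/a" "1/a"] sym1 p1_q1_r1_def by simp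
    also have "\<dots> = p1 * x + 2 * q1 * y + r1 * z" using cd aa a0 by (simp add: power2_eq_square)
    also have "\<dots> = (p1 * (r1 + r2) - 2 * q1 * (q1 + q2) + r1 * (p1 + p2)) / s" unfolding x_y_z_def using s0
      by (simp add: field_simps)
    also have "p1 * (r1 + r2) - 2 * q1 * (q1 + q2) + r1 * (p1 + p2) = 2 * (p1 * r1 - q1 * q1) + tau"
      unfolding tau_def by (simp add: algebra_simps)
    also have "\<dots> = s * s" using dt1 ss by simp
    finally show ?thesis using s0 by simp
  qed
  have trB2: "(transpose B ** G2 ** B)$1$1 + (transpose B ** G2 ** B)$2$2 = s"
  proof -
    have "(transpose B ** G2 ** B)$1$1 + (transpose B ** G2 ** B)$2$2 = p2 * a^2 + 2 * q2 * a * (y/a) + r2 * ((y/a)^2 + (1/a)^2)"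
      unfolding B_def using trace_cong[of G2 a "y/a" "1/a"] sym2 p2_q2_r2_def by simp
    also have "\<dots> = p2 * x + 2 * q2 * y + r2 * z" using cd aa a0 by (simp add: power2_eq_square)
    also have "\<dots> = (p2 * (r1 + r2) - 2 * q2 * (q1 + q2) + r2 * (p1 + p2)) / s" unfolding x_y_z_def using s0
      by (simp add: field_simps)
    also have "p2 * (r1 + r2) - 2 * q2 * (q1 + q2) + r2 * (p1 + p2) = 2 * (p2 * r2 - q2 * q2) + tau"
      unfolding tau_def by (simp add: algebra_simps)
    also have "\<dots> = s * s" using dt2 ss by simp
    finally show ?thesis using s0 by simp
  qed
  define L where "L = lambda_max (transpose B ** G1 ** B)"
  define L2 where "L2 = lambda_max (transpose B ** G2 ** B)"
  have L1: "L \<ge> 1" and Ls: "L + 1/L = s" using lmax_char[OF cong_SL[OF G1 BSL]] trB1 unfolding L_def by auto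
  have L21: "L2 \<ge> 1" and L2s: "L2 + 1/L2 = s" using lmax_char[OF cong_SL[OF G2 BSL]] trB2 unfolding L2_def by auto
  have LL2: "L2 = L" using hinj[OF L1 L21] hinj[OF L21 L1] Ls L2s by simp
  have mtau: "L^2 + 1/L^2 = tau"
  proof -
    have "(L + 1/L)^2 = L^2 + 2 + 1/L^2" using L1 by (simp add: power2_eq_square field_simps)
    thus ?thesis using Ls ss by (simp add: power2_eq_square)
  qed
  have m1: "L^2 \<ge> 1" using L1 by (simp add: one_le_power)
  have mX: "L^2 \<le> X" using hinj[OF m1 X1] mtau tauX by simp
  have eqC: "C = - (R1 * R2)" if "L^2 = X"
  proof -
    have "tau = X + 1/X" using mtau that by simp
    thus ?thesis using tauC XS by simp
  qed
  have config: "\<exists>A. orthogonal_matrix A \<and> transpose A ** G1 ** A = diag2 g1 (1/g1) \<and> transpose A ** G2 ** A = diag2 (1/g2) g2"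
    if hC: "C = - (R1 * R2)"
  proof (cases "g1 = 1")
    case True
    have "R1 = 0" unfolding S1_R1_A1_def True by simp
    hence "A1 * A1 + 4 * (q1 * q1) = 0" using AR1 by simp
    hence "A1 = 0" "q1 = 0" by (auto simp: add_nonneg_eq_0_iff)
    moreover have "p1 + r1 = 2" using tr1 True by simp
    ultimately have pr1: "p1 = 1" "r1 = 1" "q1 = 0" unfolding S1_R1_A1_def by auto
    have G1I: "G1 = mat 1" using pr1 sym1 p1_q1_r1_def by (simp add: mat2_eq mat1_2)
    obtain V where V: "orthogonal_matrix V" "transpose V ** G2 ** V = diag2 g2 (1/g2)"
      using diagonalize[OF G2] unfolding g1_g2_def by blast
    define U where "U = V ** mk2 0 1 1 0"
    have U: "orthogonal_matrix U" "transpose U ** G2 ** U = diag2 (1/g2) g2"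
      using diag_swap[OF V] unfolding U_def by auto
    have "transpose U ** G1 ** U = diag2 g1 (1/g1)" using U(1) unfolding G1I True
      by (simp add: orthogonal_matrix_def mat2_eq mat1_2 diag2_c)
    thus ?thesis using U by blast
  next
    case False
    hence g1g: "g1 > 1" using g11 by simp
    hence "1/g1 < 1" by simp
    hence R1g: "R1 > 0" using g1g unfolding S1_R1_A1_def by linarith
    define k where "k = R2 / R1"
    have kR: "k * R1 = R2" unfolding k_def using R1g by simp
    have "(A2 + k * A1)^2 + 4 * (q2 + k * q1)^2 = (A2 * A2 + 4 * (q2 * q2)) + 2 * k * C + k * k * (A1 * A1 + 4 * (q1 * q1))"
      unfolding C_def by (simp add: power2_eq_square algebra_simps)
    also have "\<dots> = R2 * R2 - 2 * (k * R1) * R2 + (k * R1) * (k * R1)" using AR1 AR2 hC by (simp add: algebra_simps)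
    also have "\<dots> = 0" using kR by simp
    finally have "(A2 + k * A1)^2 + 4 * (q2 + k * q1)^2 = 0" .
    hence Aq: "A2 = - k * A1" "q2 = - k * q1" by (auto simp: add_nonneg_eq_0_iff)
    define c0 where "c0 = S2/2 + k * S1/2"
    have p2e: "p2 = c0 - k * p1" and r2e: "r2 = c0 - k * r1"
    proof -
      have h1: "p2 + r2 = S2" and h1': "p1 + r1 = S1" using tr1 tr2 unfolding S1_R1_A1_def S2_R2_A2_def by auto
      have h2: "k * p1 + k * r1 = k * S1" using h1' by (simp add: distrib_left[symmetric])
      have h3: "p2 - r2 = - (k * p1) + k * r1" using Aq unfolding S1_R1_A1_def S2_R2_A2_def by (simp add: algebra_simps)
      show "p2 = c0 - k * p1" "r2 = c0 - k * r1" unfolding c0_def using h1 h2 h3 by linarith+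
    qed
    have G2e: "G2 = c0 *\<^sub>R mat 1 - k *\<^sub>R G1"
      using p2e r2e Aq(2) sym1 sym2 p1_q1_r1_def p2_q2_r2_def by (simp add: mat2_eq mat1_2)
    obtain U where U: "orthogonal_matrix U" "transpose U ** G1 ** U = diag2 g1 (1/g1)"
      using diagonalize[OF G1] unfolding g1_g2_def by blast
    have UU: "transpose U ** U = mat 1" using U(1) unfolding orthogonal_matrix_def by simp
    have e1: "c0 - k * g1 = 1/g2"
    proof -
      have "c0 - k * g1 = S2/2 - (k * R1)/2" unfolding c0_def S1_R1_A1_def using g11 by (simp add: field_simps)
      thus ?thesis using kR unfolding S2_R2_A2_def by (simp add: field_simps)
    qed
    have e2: "c0 - k * (1/g1) = g2"
    proof -
      have "c0 - k * (1/g1) = S2/2 + (k * R1)/2" unfolding c0_def S1_R1_A1_def using g11 by (simp add: field_simps)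
      moreover have "S2/2 + (k * R1)/2 = g2" using kR unfolding S2_R2_A2_def by (simp add: field_simps)
      ultimately show ?thesis by linarith
    qed
    have "transpose U ** G2 ** U = diag2 (1/g2) g2"
      unfolding G2e lin_cong UU U(2) using e1 e2 by (simp add: mat2_eq mat1_2 diag2_c)
    thus ?thesis using U by blast
  qed
  show ?thesis
  proof (intro bexI exI conjI)
    show "B \<in> SL2" by (rule BSL)
    show "L \<ge> 1" by (rule L1)
    show "lambda_max (transpose B ** G1 ** B) = L" unfolding L_def ..
    show "lambda_max (transpose B ** G2 ** B) = L" using LL2 unfolding L2_def .
    show "L^2 \<le> lambda_max G1 * lambda_max G2" using mX unfolding X_def g1_g2_def .
    show "L^2 = lambda_max G1 * lambda_max G2 \<longrightarrow> (\<exists>A. orthogonal_matrix A \<and>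
          transpose A ** G1 ** A = diag2 (lambda_max G1) (1 / lambda_max G1) \<and>
          transpose A ** G2 ** A = diag2 (1 / lambda_max G2) (lambda_max G2))"
      using config eqC unfolding X_def g1_g2_def by blast
  qed
qed

theorem mainTheorem8:
  fixes G1 G2 H1 H2 :: "real^2^2"
  assumes "G1 \<in> SLsym_pos" "G2 \<in> SLsym_pos" "H1 \<in> SLsym_pos" "H2 \<in> SLsym_pos"
  assumes "Kmin G1 G2 H1 H2 =
     sqrt (lambda_max G1 * lambda_max H1 * lambda_max G2 * lambda_max H2)"
  shows "\<exists>A B :: real^2^2. orthogonal_matrix A \<and> orthogonal_matrix B \<and>
     transpose A ** G1 ** A = diag2 (lambda_max G1) (1 / lambda_max G1) \<and>
     transpose A ** G2 ** A = diag2 (1 / lambda_max G2) (lambda_max G2) \<and>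
     transpose B ** H1 ** B = diag2 (lambda_max H1) (1 / lambda_max H1) \<and>
     transpose B ** H2 ** B = diag2 (1 / lambda_max H2) (lambda_max H2)"
proof -
  note G1 = assms(1) and G2 = assms(2) and H1 = assms(3) and H2 = assms(4)
  define g1 g2 h1 h2 where "g1 = lambda_max G1" "g2 = lambda_max G2" "h1 = lambda_max H1" "h2 = lambda_max H2"
  have g1p: "g1 \<ge> 1" "g2 \<ge> 1" "h1 \<ge> 1" "h2 \<ge> 1"
    using lmax_char[OF G1] lmax_char[OF G2] lmax_char[OF H1] lmax_char[OF H2] unfolding g1_g2_h1_h2_def by auto
  obtain B L where B: "B \<in> SL2" "L \<ge> 1" "lambda_max (transpose B ** G1 ** B) = L" "lambda_max (transpose B ** G2 ** B) = L"
    "L^2 \<le> g1 * g2"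
    and cG: "L^2 = g1 * g2 \<longrightarrow> (\<exists>A. orthogonal_matrix A \<and>
          transpose A ** G1 ** A = diag2 g1 (1 / g1) \<and> transpose A ** G2 ** A = diag2 (1 / g2) g2)"
    using side[OF G1 G2] unfolding g1_g2_h1_h2_def by blast
  obtain A M where A: "A \<in> SL2" "M \<ge> 1" "lambda_max (transpose A ** H1 ** A) = M" "lambda_max (transpose A ** H2 ** A) = M"
    "M^2 \<le> h1 * h2"
    and cH: "M^2 = h1 * h2 \<longrightarrow> (\<exists>A. orthogonal_matrix A \<and>
          transpose A ** H1 ** A = diag2 h1 (1 / h1) \<and> transpose A ** H2 ** A = diag2 (1 / h2) h2)"
    using side[OF H1 H2] unfolding g1_g2_h1_h2_def by blast
  define K where "K = {max (lambda_max (transpose B ** G1 ** B) * lambda_max (transpose A ** H1 ** A))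
                               (lambda_max (transpose B ** G2 ** B) * lambda_max (transpose A ** H2 ** A))
                           | A B. A \<in> SL2 \<and> B \<in> SL2}"
  have LM: "L * M \<in> K" unfolding K_def using A B by force
  have bdd: "bdd_below K"
  proof (rule bdd_belowI)
    fix k assume "k \<in> K"
    then obtain A' B' where AB: "A' \<in> SL2" "B' \<in> SL2" and k: "k = max (lambda_max (transpose B' ** G1 ** B') * lambda_max (transpose A' ** H1 ** A'))
                               (lambda_max (transpose B' ** G2 ** B') * lambda_max (transpose A' ** H2 ** A'))"
      unfolding K_def by blast
    have "lambda_max (transpose B' ** G1 ** B') \<ge> 1" "lambda_max (transpose A' ** H1 ** A') \<ge> 1"
      using lmax_char[OF cong_SL[OF G1 AB(2)]] lmax_char[OF cong_SL[OF H1 AB(1)]] by auto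
    hence "lambda_max (transpose B' ** G1 ** B') * lambda_max (transpose A' ** H1 ** A') \<ge> 0" by simp
    thus "0 \<le> k" unfolding k by simp
  qed
  have Kle: "Kmin G1 G2 H1 H2 \<le> L * M" unfolding Kmin_def K_def[symmetric] using LM bdd by (rule cInf_lower)
  define P where "P = (g1 * g2) * (h1 * h2)"
  have "sqrt P \<le> L * M" using Kle assms(5) unfolding P_def g1_g2_h1_h2_def by (simp add: mult_ac)
  hence "P \<le> (L * M)^2" using B(2) A(2) by (metis real_sqrt_le_iff real_sqrt_unique zero_le_mult_iff order_trans zero_le_one power2_eq_square real_sqrt_pow2_iff abs_of_nonneg real_sqrt_abs)
  hence P2: "(g1 * g2) * (h1 * h2) \<le> L^2 * M^2" unfolding P_def by (simp add: power_mult_distrib)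
  have pos: "L^2 > 0" "M^2 > 0" "g1 * g2 > 0" "h1 * h2 > 0" using A B g1p by auto
  have eqL: "L^2 = g1 * g2"
  proof (rule ccontr)
    assume "L^2 \<noteq> g1 * g2"
    hence "L^2 < g1 * g2" using B(5) by simp
    hence "L^2 * M^2 < (g1 * g2) * M^2" using pos by simp
    also have "\<dots> \<le> (g1 * g2) * (h1 * h2)" using A(5) pos by (simp add: mult_left_mono)
    finally show False using P2 by simp
  qed
  have eqM: "M^2 = h1 * h2"
  proof (rule ccontr)
    assume "M^2 \<noteq> h1 * h2"
    hence "M^2 < h1 * h2" using A(5) by simp
    hence "L^2 * M^2 < L^2 * (h1 * h2)" using pos by simp
    also have "\<dots> \<le> (g1 * g2) * (h1 * h2)" using B(5) pos by (simp add: mult_right_mono)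
    finally show False using P2 by simp
  qed
  from cG eqL obtain U where U: "orthogonal_matrix U" "transpose U ** G1 ** U = diag2 g1 (1 / g1)" "transpose U ** G2 ** U = diag2 (1 / g2) g2" by blast
  from cH eqM obtain V where V: "orthogonal_matrix V" "transpose V ** H1 ** V = diag2 h1 (1 / h1)" "transpose V ** H2 ** V = diag2 (1 / h2) h2" by blast
  show ?thesis using U V unfolding g1_g2_h1_h2_def by blast
qed

end
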